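(* Let $V$ be a real vector space of dimension $d>1$, $\Gamma<\mathrm{SL}(V)$ a torsion-free projective Anosov subgroup with limit maps $\xi,\xi^*$, and $\widetilde{\mathcal{M}}_\Gamma$ as in the context. Let $[v:\alpha]\in\widetilde{\mathcal{M}}_\Gamma$ and $\gamma\in\Gamma\setminus\{e\}$ be such that $\gamma\cdot[v:\alpha]=[e^Tv:e^{-T}\alpha]$ for some $T\ge0$. Then $[v]=\xi(\gamma_+)$, $[\alpha]=\xi^*(\gamma_-)$ and $T=\lambda_1(\gamma)$.
   Context: Projective Anosov: finitely generated Gromov hyperbolic, $\lambda_1(\gamma)-\lambda_2(\gamma)\ge c|\gamma|_\infty-c'$, where $\lambda_1\ge\lambda_2\ge\dots$ are the logarithms of the moduli of eigenvalues and $|\cdot|_\infty$ is stable word length. Limit maps $\xi:\partial_\infty\Gamma\to\mathbb{P}(V)$, $\xi^*:\partial_\infty\Gamma\to\mathbb{P}(V^* )$: equivariant, $\xi(x)\subset\ker\xi^*(y)$ iff $x=y$, and for infinite order $\gamma$ with attracting/repelling boundary fixed points $\gamma_\pm=\lim_{n\to\pm\infty}\gamma^n$, $\lambda_1(\gamma)>0$, the eigenvalue of modulus $e^{\lambda_1(\gamma)}$ is real and simple with eigenline $\xi(\gamma_+)$, and the eigenline of the dual action $\alpha\mapsto\alpha\circ\gamma^{-1}$ for the eigenvalue of modulus $e^{-\lambda_1(\gamma)}$ is $\xi^*(\gamma_-)$. $\mathbb{L}=\{[v:\alpha]\in\mathbb{P}(V\times V^* ):\alpha(v)>0\}$, $\gamma\cdot[v:\alpha]=[\gamma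 v:\alpha\circ\gamma^{-1}]$, and $\widetilde{\mathcal{M}}_\Gamma=\{[v:\alpha]\in\mathbb{L}:\forall x\in\partial_\infty\Gamma,\ \xi^*(x)(v)\ne0\text{ or }\alpha(\xi(x))\ne0\}$ (where $\xi^*(x)(v)\neq 0$ means a representative linear form does not vanish on $v$). *)

theory Defs
  imports "HOL-Analysis.Analysis" "HOL-Computational_Algebra.Polynomial" "HOL-Library.Multiset"
begin

text \<open>V = real^'n (d = CARD('n)); endomorphisms are matrices real^'n^'n.
  A linear form alpha in V* is represented by a vector, alpha(w) = alpha \<bullet> w;
  the form alpha o g is then  alpha v* g  (row vector times matrix).
  Points of projective spaces are represented by nonzero representatives.\<close>

definition proj_eq :: "real^'n \<Rightarrow> real^'n \<Rightarrow> bool" where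
  "proj_eq u w \<longleftrightarrow> (\<exists>c. c \<noteq> 0 \<and> u = c *\<^sub>R w)"

definition mpow :: "real^'n^'n \<Rightarrow> nat \<Rightarrow> real^'n^'n" where
  "mpow g k = ((\<lambda>A. g ** A) ^^ k) (mat 1)"

subsection \<open>Eigenvalues\<close>

definition cpoly :: "real^'n^'n \<Rightarrow> complex poly" where
  "cpoly A = det (\<chi> i j. (if i = j then [:0, 1:] else 0) - [: complex_of_real (A $ i $ j) :])"

text \<open>Moduli of the complex eigenvalues, with multiplicity, in decreasing order.\<close>
definition eig_moduli :: "real^'n^'n \<Rightarrow> real list" where
  "eig_moduli A = rev (sorted_list_of_multiset (image_mset cmod (proots (cpoly A))))"

text \<open>lam k A = lambda_k(A), for k = 1, ..., d.\<close>
definition lam :: "nat \<Rightarrow> real^'n^'n \<Rightarrow> real" where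
  "lam k A = ln (eig_moduli A ! (k - 1))"

subsection \<open>Groups\<close>

definition SL_subgroup :: "(real^'n^'n) set \<Rightarrow> bool" where
  "SL_subgroup G \<longleftrightarrow> G \<subseteq> {A. det A = 1} \<and> mat 1 \<in> G
     \<and> (\<forall>g\<in>G. \<forall>h\<in>G. g ** h \<in> G) \<and> (\<forall>g\<in>G. matrix_inv g \<in> G)"

definition infinite_order :: "real^'n^'n \<Rightarrow> bool" where
  "infinite_order g \<longleftrightarrow> (\<forall>k>0. mpow g k \<noteq> mat 1)"

definition torsion_free :: "(real^'n^'n) set \<Rightarrow> bool" where
  "torsion_free G \<longleftrightarrow> (\<forall>g\<in>G. g \<noteq> mat 1 \<longrightarrow> infinite_order g)"

text \<open>Words in the generators S and their inverses.\<close>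
definition is_word :: "(real^'n^'n) set \<Rightarrow> (real^'n^'n) list \<Rightarrow> real^'n^'n \<Rightarrow> bool" where
  "is_word S ws g \<longleftrightarrow> set ws \<subseteq> S \<union> matrix_inv ` S \<and> foldr (**) ws (mat 1) = g"

definition generates :: "(real^'n^'n) set \<Rightarrow> (real^'n^'n) set \<Rightarrow> bool" where
  "generates S G \<longleftrightarrow> S \<subseteq> G \<and> (\<forall>g\<in>G. \<exists>ws. is_word S ws g)"

definition wlen :: "(real^'n^'n) set \<Rightarrow> real^'n^'n \<Rightarrow> nat" where
  "wlen S g = (LEAST k. \<exists>ws. length ws = k \<and> is_word S ws g)"

definition wdist :: "(real^'n^'n) set \<Rightarrow> real^'n^'n \<Rightarrow> real^'n^'n \<Rightarrow> real" where
  "wdist S g h = real (wlen S (matrix_inv g ** h))"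

text \<open>Gromov product (x|y)_w for the word metric.\<close>
definition gprod :: "(real^'n^'n) set \<Rightarrow> real^'n^'n \<Rightarrow> real^'n^'n \<Rightarrow> real^'n^'n \<Rightarrow> real" where
  "gprod S w x y = (wdist S x w + wdist S y w - wdist S x y) / 2"

definition gromov_hyperbolic :: "(real^'n^'n) set \<Rightarrow> (real^'n^'n) set \<Rightarrow> bool" where
  "gromov_hyperbolic G S \<longleftrightarrow> (\<exists>\<delta>\<ge>0. \<forall>x\<in>G. \<forall>y\<in>G. \<forall>z\<in>G. \<forall>w\<in>G.
      gprod S w x z \<ge> min (gprod S w x y) (gprod S w y z) - \<delta>)"

text \<open>Finitely generated hyperbolic group, with a chosen finite generating set S.\<close>
definition fg_hyperbolic :: "(real^'n^'n) set \<Rightarrow> (real^'n^'n) set \<Rightarrow> bool" where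
  "fg_hyperbolic G S \<longleftrightarrow> finite S \<and> generates S G \<and> gromov_hyperbolic G S"

subsection \<open>Gromov boundary (sequences converging at infinity, modulo equivalence)\<close>

definition conv_inf :: "(real^'n^'n) set \<Rightarrow> (real^'n^'n) set \<Rightarrow> (nat \<Rightarrow> real^'n^'n) \<Rightarrow> bool" where
  "conv_inf G S s \<longleftrightarrow> (\<forall>k. s k \<in> G) \<and>
     (\<forall>K. \<exists>N. \<forall>m\<ge>N. \<forall>k\<ge>N. gprod S (mat 1) (s m) (s k) \<ge> K)"

definition seq_equiv :: "(real^'n^'n) set \<Rightarrow> (nat \<Rightarrow> real^'n^'n) \<Rightarrow> (nat \<Rightarrow> real^'n^'n) \<Rightarrow> bool" where
  "seq_equiv S s t \<longleftrightarrow> (\<forall>K. \<exists>N. \<forall>m\<ge>N. \<forall>k\<ge>N. gprod S (mat 1) (s m) (t k) \<ge> K)"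

definition bclass :: "(real^'n^'n) set \<Rightarrow> (real^'n^'n) set \<Rightarrow> (nat \<Rightarrow> real^'n^'n) \<Rightarrow> (nat \<Rightarrow> real^'n^'n) set" where
  "bclass G S s = {t. conv_inf G S t \<and> seq_equiv S s t}"

definition bdry :: "(real^'n^'n) set \<Rightarrow> (real^'n^'n) set \<Rightarrow> (nat \<Rightarrow> real^'n^'n) set set" where
  "bdry G S = {bclass G S s | s. conv_inf G S s}"

text \<open>Action of g on the boundary (left translation of sequences).\<close>
definition bact :: "real^'n^'n \<Rightarrow> (nat \<Rightarrow> real^'n^'n) set \<Rightarrow> (nat \<Rightarrow> real^'n^'n) set" where
  "bact g x = (\<lambda>t k. g ** t k) ` x"

text \<open>gamma_+ = lim gamma^n, gamma_- = lim gamma^(-n).\<close>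
definition attr_pt :: "(real^'n^'n) set \<Rightarrow> (real^'n^'n) set \<Rightarrow> real^'n^'n \<Rightarrow> (nat \<Rightarrow> real^'n^'n) set" where
  "attr_pt G S g = bclass G S (\<lambda>k. mpow g k)"

definition rep_pt :: "(real^'n^'n) set \<Rightarrow> (real^'n^'n) set \<Rightarrow> real^'n^'n \<Rightarrow> (nat \<Rightarrow> real^'n^'n) set" where
  "rep_pt G S g = bclass G S (\<lambda>k. mpow (matrix_inv g) k)"

subsection \<open>Projective Anosov\<close>

definition stable_len :: "(real^'n^'n) set \<Rightarrow> real^'n^'n \<Rightarrow> real" where
  "stable_len S g = lim (\<lambda>k. real (wlen S (mpow g k)) / real k)"

definition proj_anosov :: "(real^'n^'n) set \<Rightarrow> (real^'n^'n) set \<Rightarrow> bool" where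
  "proj_anosov G S \<longleftrightarrow> SL_subgroup G \<and> fg_hyperbolic G S \<and>
     (\<exists>c>0. \<exists>c'. \<forall>g\<in>G. lam 1 g - lam 2 g \<ge> c * stable_len S g - c')"

text \<open>Limit maps xi : bdry -> P(V), xis : bdry -> P(V*), given by nonzero representatives.\<close>
definition limit_maps :: "(real^'n^'n) set \<Rightarrow> (real^'n^'n) set
    \<Rightarrow> ((nat \<Rightarrow> real^'n^'n) set \<Rightarrow> real^'n) \<Rightarrow> ((nat \<Rightarrow> real^'n^'n) set \<Rightarrow> real^'n) \<Rightarrow> bool" where
  "limit_maps G S \<xi> \<xi>s \<longleftrightarrow>
     (\<forall>x\<in>bdry G S. \<xi> x \<noteq> 0 \<and> \<xi>s x \<noteq> 0) \<and>
     (\<forall>g\<in>G. \<forall>x\<in>bdry G S. proj_eq (\<xi> (bact g x)) (g *v \<xi> x)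
                          \<and> proj_eq (\<xi>s (bact g x)) (\<xi>s x v* matrix_inv g)) \<and>
     (\<forall>x\<in>bdry G S. \<forall>y\<in>bdry G S. \<xi>s y \<bullet> \<xi> x = 0 \<longleftrightarrow> x = y) \<and>
     (\<forall>g\<in>G. infinite_order g \<longrightarrow>
        lam 1 g > 0 \<and>
        (\<exists>\<mu>::real. \<bar>\<mu>\<bar> = exp (lam 1 g)
            \<and> count (proots (cpoly g)) (complex_of_real \<mu>) = 1
            \<and> (\<forall>z. z \<in># proots (cpoly g) \<and> cmod z = exp (lam 1 g) \<longrightarrow> z = complex_of_real \<mu>)
            \<and> {w. g *v w = \<mu> *\<^sub>R w} = span {\<xi> (attr_pt G S g)}) \<and>
        (\<exists>\<nu>::real. \<bar>\<nu>\<bar> = exp (- lam 1 g)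
            \<and> {a. a v* matrix_inv g = \<nu> *\<^sub>R a} = span {\<xi>s (rep_pt G S g)}))"

text \<open>The domain M~_Gamma inside L.\<close>
definition Mtilde :: "(real^'n^'n) set \<Rightarrow> (real^'n^'n) set
    \<Rightarrow> ((nat \<Rightarrow> real^'n^'n) set \<Rightarrow> real^'n) \<Rightarrow> ((nat \<Rightarrow> real^'n^'n) set \<Rightarrow> real^'n)
    \<Rightarrow> real^'n \<Rightarrow> real^'n \<Rightarrow> bool" where
  "Mtilde G S \<xi> \<xi>s v \<alpha> \<longleftrightarrow> \<alpha> \<bullet> v > 0 \<and>
     (\<forall>x\<in>bdry G S. \<xi>s x \<bullet> v \<noteq> 0 \<or> \<alpha> \<bullet> \<xi> x \<noteq> 0)"

text \<open>g . [v:alpha] = [u:beta] in P(V x V*).\<close>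
definition act_eq :: "real^'n^'n \<Rightarrow> real^'n \<Rightarrow> real^'n \<Rightarrow> real^'n \<Rightarrow> real^'n \<Rightarrow> bool" where
  "act_eq g v \<alpha> u \<beta> \<longleftrightarrow> (\<exists>c::real. c \<noteq> 0 \<and> g *v v = c *\<^sub>R u \<and> \<alpha> v* matrix_inv g = c *\<^sub>R \<beta>)"

end

theory Submission
  imports Defs "HOL-Real_Asymp.Real_Asymp"
begin

lemma inv_props:
  fixes A :: "real^'n^'n"
  assumes "det A \<noteq> 0"
  shows "A ** matrix_inv A = mat 1" "matrix_inv A ** A = mat 1"
proof -
  have "invertible A" using assms invertible_det_nz by blast
  then have "\<exists>A'. A ** A' = mat 1 \<and> A' ** A = mat 1" unfolding invertible_def by blast
  then have "A ** matrix_inv A = mat 1 \<and> matrix_inv A ** A = mat 1"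
    unfolding matrix_inv_def by (rule someI_ex)
  then show "A ** matrix_inv A = mat 1" "matrix_inv A ** A = mat 1" by auto
qed

lemma inv_unique:
  fixes A B :: "real^'n^'n"
  assumes "det A \<noteq> 0" "B ** A = mat 1"
  shows "matrix_inv A = B"
proof -
  have "B = B ** (A ** matrix_inv A)" using inv_props[OF assms(1)] by simp
  also have "\<dots> = matrix_inv A" by (simp add: matrix_mul_assoc assms(2))
  finally show ?thesis by simp
qed

lemma det_inv: fixes A :: "real^'n^'n" assumes "det A = 1" shows "det (matrix_inv A) = 1"
proof -
  have "det (matrix_inv A ** A) = 1" using inv_props[of A] assms by simp
  then show ?thesis using assms by (simp add: det_mul)
qed

lemma inv_inv: fixes A :: "real^'n^'n" assumes "det A \<noteq> 0" shows "matrix_inv (matrix_inv A) = A"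
proof -
  have d: "det (matrix_inv A) \<noteq> 0" using inv_props(2)[OF assms] det_mul[of "matrix_inv A" A] by auto
  show ?thesis by (rule inv_unique[OF d inv_props(1)[OF assms]])
qed

lemma inv_mult: fixes A B :: "real^'n^'n" assumes "det A \<noteq> 0" "det B \<noteq> 0"
  shows "matrix_inv (A ** B) = matrix_inv B ** matrix_inv A"
proof (rule inv_unique)
  show "det (A ** B) \<noteq> 0" using assms by (simp add: det_mul)
  have "matrix_inv B ** matrix_inv A ** (A ** B) = matrix_inv B ** (matrix_inv A ** A) ** B"
    by (simp add: matrix_mul_assoc)
  also have "\<dots> = mat 1" using inv_props[OF assms(1)] inv_props[OF assms(2)] by simp
  finally show "matrix_inv B ** matrix_inv A ** (A ** B) = mat 1" .
qed

lemma inv_one: "matrix_inv (mat 1 :: real^'n^'n) = mat 1"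
  by (rule inv_unique) auto

lemma mpow_0[simp]: "mpow g 0 = mat 1" by (simp add: mpow_def)
lemma mpow_Suc: "mpow g (Suc k) = g ** mpow g k" by (simp add: mpow_def)
lemma mpow_add: "mpow g (a + b) = mpow g a ** mpow g b"
  by (induction a) (auto simp: mpow_Suc matrix_mul_assoc)
lemma mpow_mult: "mpow g (a * b) = mpow (mpow g b) a"
  by (induction a) (auto simp: mpow_Suc mpow_add)
lemma mpow_1[simp]: "mpow g 1 = g" by (simp add: mpow_def)
lemma mpow_Suc0[simp]: "mpow g (Suc 0) = g" by (simp add: mpow_def)

lemma cpoly_eval:
  fixes A :: "real^'n^'n"
  shows "poly (cpoly A) (complex_of_real x) = complex_of_real (det (mat x - A))"
proof -
  have e: "poly ((\<chi> i j. (if i = j then [:0, 1:] else 0) - [: complex_of_real (A $ i $ j) :]) $ i $ j) (complex_of_real x)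
     = complex_of_real ((mat x - A) $ i $ j)" for i j
    by (simp add: mat_def)
  show ?thesis
    unfolding cpoly_def det_def poly_sum of_real_sum of_real_prod
    by (simp add: poly_prod, intro sum.cong refl arg_cong2[where f="(*)"] prod.cong) (auto simp: mat_def)
qed


lemma mat_mv: "(mat x :: real^'n^'n) *v w = x *\<^sub>R w"
proof -
  have "(\<Sum>j\<in>UNIV. (if i = j then x else 0) * w $ j) = (\<Sum>j\<in>UNIV. if i = j then x * w $ j else 0)" for i
    by (rule sum.cong) auto
  then show ?thesis by (simp add: vec_eq_iff matrix_vector_mult_def mat_def)
qed

lemma mat_sub_mv: fixes A :: "real^'n^'n" shows "(mat x - A) *v w = x *\<^sub>R w - A *v w"
  by (simp add: matrix_vector_mult_diff_rdistrib mat_mv)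

lemma eig_iff_det:
  fixes A :: "real^'n^'n"
  shows "det (mat x - A) = 0 \<longleftrightarrow> (\<exists>w. w \<noteq> 0 \<and> A *v w = x *\<^sub>R w)"
proof -
  have "det (mat x - A) = 0 \<longleftrightarrow> \<not> (\<exists>B. B ** (mat x - A) = mat 1)"
    using invertible_det_nz invertible_left_inverse by metis
  also have "\<dots> \<longleftrightarrow> (\<exists>w. w \<noteq> 0 \<and> (mat x - A) *v w = 0)"
    using matrix_left_invertible_ker by blast
  also have "\<dots> \<longleftrightarrow> (\<exists>w. w \<noteq> 0 \<and> A *v w = x *\<^sub>R w)"
    by (simp add: mat_sub_mv) (metis eq_iff_diff_eq_0)
  finally show ?thesis .
qed


lemma eig_root:
  fixes A :: "real^'n^'n"
  shows "poly (cpoly A) (complex_of_real x) = 0 \<longleftrightarrow> (\<exists>w. w \<noteq> 0 \<and> A *v w = x *\<^sub>R w)"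
  by (simp add: cpoly_eval eig_iff_det)

lemma dot_inv: "(a v* M) \<bullet> w = a \<bullet> (M *v w)" for a w :: "real^'n"
  by (rule dot_lmul_matrix)

subsection \<open>Words\<close>

lemma foldr_mul: "foldr (**) xs B = foldr (**) xs (mat 1) ** (B::real^'n^'n)"
  by (induction xs) (auto simp: matrix_mul_assoc)

lemma SL_det: "SL_subgroup G \<Longrightarrow> g \<in> G \<Longrightarrow> det g = 1"
  unfolding SL_subgroup_def by auto

lemma SL_mul: "SL_subgroup G \<Longrightarrow> g \<in> G \<Longrightarrow> h \<in> G \<Longrightarrow> g ** h \<in> G"
  unfolding SL_subgroup_def by auto

lemma SL_inv: "SL_subgroup G \<Longrightarrow> g \<in> G \<Longrightarrow> matrix_inv g \<in> G"
  unfolding SL_subgroup_def by auto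

lemma SL_one: "SL_subgroup G \<Longrightarrow> mat 1 \<in> G"
  unfolding SL_subgroup_def by auto

lemma SL_mpow: "SL_subgroup G \<Longrightarrow> g \<in> G \<Longrightarrow> mpow g k \<in> G"
  by (induction k) (auto simp: mpow_Suc SL_mul SL_one)

lemma wlen_word:
  assumes "generates S G" "g \<in> G"
  shows "\<exists>ws. length ws = wlen S g \<and> is_word S ws g"
proof -
  obtain ws where "is_word S ws g" using assms unfolding generates_def by blast
  then have "\<exists>k ws. length ws = k \<and> is_word S ws g" by blast
  then show ?thesis unfolding wlen_def by (rule LeastI_ex)
qed

lemma wlen_le: "is_word S ws g \<Longrightarrow> wlen S g \<le> length ws"
  unfolding wlen_def by (rule Least_le) blast

lemma wlen_one: "wlen S (mat 1) = 0"
proof -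
  have "is_word S [] (mat 1)" by (simp add: is_word_def)
  from wlen_le[OF this] show ?thesis by simp
qed

lemma wlen_mul:
  assumes "generates S G" "g \<in> G" "h \<in> G"
  shows "wlen S (g ** h) \<le> wlen S g + wlen S h"
proof -
  obtain ws where w: "length ws = wlen S g" "is_word S ws g" using wlen_word assms by blast
  obtain vs where v: "length vs = wlen S h" "is_word S vs h" using wlen_word assms by blast
  have "is_word S (ws @ vs) (g ** h)"
    using w v unfolding is_word_def by (auto simp: foldr_append foldr_mul[of ws "foldr (**) vs (mat 1)"])
  from wlen_le[OF this] w v show ?thesis by simp
qed

lemma word_det:
  assumes "SL_subgroup G" "generates S G" "set ws \<subseteq> S \<union> matrix_inv ` S"
  shows "det (foldr (**) ws (mat 1)) = 1"
  using assms(3)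
proof (induction ws)
  case Nil then show ?case by simp
next
  case (Cons a ws)
  have "a \<in> G" using Cons.prems assms(1,2) SL_inv unfolding generates_def by auto
  then show ?case using Cons SL_det[OF assms(1)] by (simp add: det_mul)
qed

lemma word_inv:
  assumes "SL_subgroup G" "generates S G" "is_word S ws g"
  shows "is_word S (rev (map matrix_inv ws)) (matrix_inv g)"
proof -
  have SG: "S \<subseteq> G" using assms(2) unfolding generates_def by auto
  have letters: "matrix_inv a \<in> S \<union> matrix_inv ` S" if "a \<in> S \<union> matrix_inv ` S" for a
  proof -
    from that consider "a \<in> S" | t where "t \<in> S" "a = matrix_inv t" by blast
    then show ?thesis
    proof cases
      case 1 then show ?thesis by blast
    next
      case 2
      then have "det t = 1" using SG SL_det[OF assms(1)] by auto
      then have "matrix_inv a = t" using 2 inv_inv[of t] by simp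
      then show ?thesis using 2 by simp
    qed
  qed
  have "set ws \<subseteq> S \<union> matrix_inv ` S \<Longrightarrow>
        matrix_inv (foldr (**) ws (mat 1)) = foldr (**) (rev (map matrix_inv ws)) (mat 1)" for ws
  proof (induction ws)
    case Nil then show ?case by (simp add: inv_one)
  next
    case (Cons a ws)
    have "a \<in> G" using Cons.prems SG SL_inv[OF assms(1)] by auto
    then have da: "det a = 1" using SL_det[OF assms(1)] by auto
    have dw: "det (foldr (**) ws (mat 1)) = 1" using word_det[OF assms(1,2)] Cons.prems by auto
    have "matrix_inv (foldr (**) (a # ws) (mat 1)) = matrix_inv (foldr (**) ws (mat 1)) ** matrix_inv a"
      using inv_mult[of a "foldr (**) ws (mat 1)"] da dw by simp
    also have "\<dots> = foldr (**) (rev (map matrix_inv ws)) (mat 1) ** matrix_inv a"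
      using Cons by simp
    also have "\<dots> = foldr (**) (rev (map matrix_inv (a # ws))) (mat 1)"
      using foldr_mul[of "rev (map matrix_inv ws)" "matrix_inv a ** mat 1"] by (simp add: foldr_append)
    finally show ?case .
  qed
  moreover have "set (rev (map matrix_inv ws)) \<subseteq> S \<union> matrix_inv ` S"
    using assms(3) letters unfolding is_word_def by (simp add: subset_iff) blast
  ultimately show ?thesis using assms(3) unfolding is_word_def by auto
qed

lemma wlen_inv_le:
  assumes "SL_subgroup G" "generates S G" "g \<in> G"
  shows "wlen S (matrix_inv g) \<le> wlen S g"
proof -
  obtain ws where w: "length ws = wlen S g" "is_word S ws g" using wlen_word assms by blast
  from wlen_le[OF word_inv[OF assms(1,2) w(2)]] w show ?thesis by simp
qed

lemma wlen_inv:
  assumes "SL_subgroup G" "generates S G" "g \<in> G"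
  shows "wlen S (matrix_inv g) = wlen S g"
proof -
  have "wlen S (matrix_inv (matrix_inv g)) \<le> wlen S (matrix_inv g)"
    using wlen_inv_le[OF assms(1,2)] SL_inv[OF assms(1,3)] by blast
  moreover have "matrix_inv (matrix_inv g) = g"
    using inv_inv[of g] SL_det[OF assms(1,3)] by simp
  ultimately have "wlen S g \<le> wlen S (matrix_inv g)" by simp
  with wlen_inv_le[OF assms] show ?thesis by simp
qed


subsection \<open>Distances\<close>

lemma wdist_sym:
  assumes "SL_subgroup G" "generates S G" "x \<in> G" "y \<in> G"
  shows "wdist S x y = wdist S y x"
proof -
  have dx: "det x = 1" and dy: "det y = 1" using SL_det assms by blast+
  have "matrix_inv (matrix_inv x ** y) = matrix_inv y ** x"
    using inv_mult[of "matrix_inv x" y] det_inv[OF dx] dy inv_inv[of x] dx by simp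
  moreover have "matrix_inv x ** y \<in> G" using assms SL_inv SL_mul by blast
  ultimately show ?thesis unfolding wdist_def using wlen_inv[OF assms(1,2)] by metis
qed

lemma wdist_refl: "det x = 1 \<Longrightarrow> wdist S x x = 0"
  unfolding wdist_def using inv_props(2)[of x] wlen_one by simp

lemma wdist_tri:
  assumes "SL_subgroup G" "generates S G" "x \<in> G" "y \<in> G" "z \<in> G"
  shows "wdist S x z \<le> wdist S x y + wdist S y z"
proof -
  have dy: "det y = 1" using SL_det assms by blast
  have "(matrix_inv x ** y) ** (matrix_inv y ** z) = matrix_inv x ** (y ** matrix_inv y) ** z"
    by (simp add: matrix_mul_assoc)
  then have "matrix_inv x ** z = (matrix_inv x ** y) ** (matrix_inv y ** z)"
    using inv_props(1)[of y] dy by simp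
  moreover have "matrix_inv x ** y \<in> G" "matrix_inv y ** z \<in> G" using assms SL_inv SL_mul by blast+
  ultimately show ?thesis unfolding wdist_def using wlen_mul[OF assms(2)]
    by (metis of_nat_add of_nat_le_iff)
qed

lemma wdist_left:
  assumes "det x = 1"
  shows "wdist S x (x ** y) = real (wlen S y)"
  unfolding wdist_def using inv_props(2)[of x] assms by (simp add: matrix_mul_assoc)

lemma wdist_left2:
  assumes "det x = 1" "det z = 1"
  shows "wdist S (x ** z) (x ** y) = wdist S z y"
proof -
  have "matrix_inv (x ** z) ** (x ** y) = matrix_inv z ** (matrix_inv x ** x) ** y"
    using inv_mult[of x z] assms by (simp add: matrix_mul_assoc)
  then show ?thesis unfolding wdist_def using inv_props(2)[of x] assms by simp
qed

lemma wlen_mpow: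
  assumes "SL_subgroup G" "generates S G" "g \<in> G"
  shows "wlen S (mpow g k) \<le> k * wlen S g"
proof (induction k)
  case 0 then show ?case by (simp add: wlen_one)
next
  case (Suc k)
  have "wlen S (mpow g (Suc k)) \<le> wlen S g + wlen S (mpow g k)"
    unfolding mpow_Suc using wlen_mul[OF assms(2,3) SL_mpow[OF assms(1,3)]] by blast
  then show ?case using Suc by simp
qed

lemma chain_bound:
  fixes D :: "nat \<Rightarrow> nat \<Rightarrow> real" and \<delta> A L :: real
  defines "gp \<equiv> \<lambda>w x y. (D x w + D y w - D x y) / 2"
  assumes sym: "\<And>x y. D x y = D y x" and refl: "\<And>x. D x x = 0"
    and hyp: "\<And>w x y z. gp w x z \<ge> min (gp w x y) (gp w y z) - \<delta>"
    and step: "\<And>m. D m (m+1) \<ge> L" and mid: "\<And>m. m \<ge> 1 \<Longrightarrow> gp m (m-1) (m+1) \<le> A"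
    and LA: "L > 2*A + 4*\<delta>" and A0: "0 \<le> A" and d0: "0 \<le> \<delta>"
  shows "i \<le> m \<Longrightarrow> m \<le> j \<Longrightarrow> gp m i j \<le> A + 2*\<delta>"
proof (induction "j - i" arbitrary: i m j rule: less_induct)
  case less
  show ?case
  proof (cases "i = m \<or> m = j")
    case True
    then show ?thesis using A0 d0 sym refl unfolding gp_def by auto
  next
    case False
    then have im: "i < m" and mj: "m < j" using less.prems by auto
    have Y1: "gp m (m-1) i = D (m-1) m - gp (m-1) i m"
      unfolding gp_def using sym[of i m] sym[of i "m-1"] sym[of m "m-1"] by (simp add: field_simps)
    have I1: "gp (m-1) i m \<le> A + 2*\<delta>"
      using less.hyps[of m i "m-1"] im mj by auto
    have Y2: "gp m j (m+1) = D m (m+1) - gp (m+1) m j"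
      unfolding gp_def using sym[of j m] sym[of j "m+1"] sym[of m "m+1"] by (simp add: field_simps)
    have I2: "gp (m+1) m j \<le> A + 2*\<delta>"
      using less.hyps[of j m "m+1"] im mj by auto
    have s1: "D (m-1) m \<ge> L" using step[of "m-1"] im by simp
    have s2: "D m (m+1) \<ge> L" using step[of m] by simp
    have h1: "gp m (m-1) (m+1) \<ge> min (gp m (m-1) i) (gp m i (m+1)) - \<delta>" by (rule hyp)
    have h2: "gp m i (m+1) \<ge> min (gp m i j) (gp m j (m+1)) - \<delta>" by (rule hyp)
    have md: "gp m (m-1) (m+1) \<le> A" using mid[of m] im by simp
    show ?thesis
    proof (rule ccontr)
      assume "\<not> ?thesis"
      then show False using Y1 I1 Y2 I2 s1 s2 h1 h2 md LA d0
        unfolding min_def by (auto split: if_splits)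
    qed
  qed
qed


subsection \<open>Growth\<close>

lemma word_norm:
  fixes M :: real
  assumes "set ws \<subseteq> X" "\<And>s x. s \<in> X \<Longrightarrow> norm (s *v x) \<le> M * norm x" "0 \<le> M"
  shows "norm (foldr (**) ws (mat 1) *v x) \<le> M ^ length ws * norm (x::real^'n)"
  using assms(1)
proof (induction ws arbitrary: x)
  case Nil then show ?case by simp
next
  case (Cons a ws)
  have "norm (foldr (**) (a # ws) (mat 1) *v x) = norm (a *v (foldr (**) ws (mat 1) *v x))"
    by (simp add: matrix_vector_mul_assoc)
  also have "\<dots> \<le> M * norm (foldr (**) ws (mat 1) *v x)" using assms(2) Cons.prems by simp
  also have "\<dots> \<le> M * (M ^ length ws * norm x)"
    using Cons assms(3) by (simp add: mult_left_mono)
  finally show ?case by simp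
qed

lemma mpow_eig: "g *v w = \<mu> *\<^sub>R w \<Longrightarrow> mpow g n *v w = (\<mu> ^ n) *\<^sub>R (w::real^'n)"
  by (induction n) (auto simp: mpow_Suc matrix_vector_mul_assoc[symmetric] matrix_vector_mult_scaleR)

lemma growth:
  assumes SL: "SL_subgroup G" and gen: "generates S G" and fin: "finite S" and g: "g \<in> G"
    and w: "w \<noteq> 0" "g *v w = \<mu> *\<^sub>R w" and mu: "\<bar>\<mu>\<bar> > 1"
  shows "\<exists>a>0. \<forall>n. a * real n \<le> real (wlen S (mpow g n))"
proof -
  define X where "X = S \<union> matrix_inv ` S"
  define M where "M = 2 + (\<Sum>s\<in>X. onorm ((*v) s))"
  have finX: "finite X" using fin unfolding X_def by simp
  have onn: "0 \<le> onorm ((*v) s)" for s :: "real^'n^'n" by (rule onorm_pos_le) simp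
  have "0 \<le> (\<Sum>s\<in>X. onorm ((*v) s))" by (rule sum_nonneg) (rule onn)
  then have M2: "M \<ge> 2" unfolding M_def by simp
  have bnd: "norm (s *v x) \<le> M * norm x" if "s \<in> X" for s x
  proof -
    have "onorm ((*v) s) \<le> (\<Sum>s\<in>X. onorm ((*v) s))"
      by (rule member_le_sum) (use that finX onn in auto)
    then have "onorm ((*v) s) \<le> M" unfolding M_def by simp
    moreover have "norm (s *v x) \<le> onorm ((*v) s) * norm x" by (rule onorm) simp
    ultimately show ?thesis by (meson mult_right_mono norm_ge_zero order_trans)
  qed
  define a where "a = ln \<bar>\<mu>\<bar> / ln M"
  have lnM: "ln M > 0" using M2 by simp
  have lnmu: "ln \<bar>\<mu>\<bar> > 0" using mu by simp
  have "a > 0" unfolding a_def using lnM lnmu by simp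
  moreover have "a * real n \<le> real (wlen S (mpow g n))" for n
  proof -
    obtain ws where ws: "length ws = wlen S (mpow g n)" "is_word S ws (mpow g n)"
      using wlen_word[OF gen SL_mpow[OF SL g]] by blast
    have "norm (mpow g n *v w) \<le> M ^ length ws * norm w"
      using ws(2) word_norm[of ws X M w] bnd M2 unfolding is_word_def X_def by auto
    then have "\<bar>\<mu>\<bar> ^ n * norm w \<le> M ^ length ws * norm w"
      using mpow_eig[OF w(2)] by (simp add: power_abs)
    then have "\<bar>\<mu>\<bar> ^ n \<le> M ^ length ws" using w(1) by simp
    then have "ln (\<bar>\<mu>\<bar> ^ n) \<le> ln (M ^ length ws)" using mu M2 by simp
    then have "real n * ln \<bar>\<mu>\<bar> \<le> real (length ws) * ln M" by (simp add: ln_realpow)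
    then show ?thesis unfolding a_def using lnM ws(1) by (simp add: field_simps)
  qed
  ultimately show ?thesis by blast
qed


lemma ev2: fixes a C D :: real assumes "a > 0"
  shows "eventually (\<lambda>k. C + D * real k < a * 2 ^ k) sequentially"
  using assms by real_asymp

lemma gprod_sym:
  assumes "SL_subgroup G" "generates S G" "x \<in> G" "y \<in> G"
  shows "gprod S w x y = gprod S w y x"
  unfolding gprod_def using wdist_sym[OF assms] by simp

lemma gprod_pert:
  assumes SL: "SL_subgroup G" and gen: "generates S G"
    and G: "w \<in> G" "x \<in> G" "y \<in> G" "x' \<in> G" "y' \<in> G"
  shows "gprod S w x y \<ge> gprod S w x' y' - wdist S x x' - wdist S y y'"
proof -
  have "wdist S x' w \<le> wdist S x' x + wdist S x w" by (rule wdist_tri[OF SL gen]) (use G in auto)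
  moreover have "wdist S y' w \<le> wdist S y' y + wdist S y w" by (rule wdist_tri[OF SL gen]) (use G in auto)
  moreover have "wdist S x y \<le> wdist S x x' + wdist S x' y" by (rule wdist_tri[OF SL gen]) (use G in auto)
  moreover have "wdist S x' y \<le> wdist S x' y' + wdist S y' y" by (rule wdist_tri[OF SL gen]) (use G in auto)
  moreover have "wdist S x' x = wdist S x x'" "wdist S y' y = wdist S y y'"
    using wdist_sym[OF SL gen] G by auto
  ultimately have "(wdist S x' w + wdist S y' w - wdist S x' y') - 2 * wdist S x x' - 2 * wdist S y y'
      \<le> wdist S x w + wdist S y w - wdist S x y" by linarith
  then show ?thesis unfolding gprod_def by (simp add: field_simps)
qed

lemma powers_conv_inf:
  assumes SL: "SL_subgroup G" and fg: "fg_hyperbolic G S" and g: "g \<in> G"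
    and w: "w \<noteq> 0" "g *v w = \<mu> *\<^sub>R w" and mu: "\<bar>\<mu>\<bar> > 1"
  shows "conv_inf G S (\<lambda>k. mpow g k)"
proof -
  have gen: "generates S G" and fin: "finite S" and hyp: "gromov_hyperbolic G S"
    using fg unfolding fg_hyperbolic_def by auto
  obtain \<delta> where d0: "\<delta> \<ge> 0" and hypd: "\<And>x y z v. x \<in> G \<Longrightarrow> y \<in> G \<Longrightarrow> z \<in> G \<Longrightarrow> v \<in> G \<Longrightarrow>
      gprod S v x z \<ge> min (gprod S v x y) (gprod S v y z) - \<delta>"
    using hyp unfolding gromov_hyperbolic_def by metis
  obtain a where a0: "a > 0" and ga: "\<And>n. a * real n \<le> real (wlen S (mpow g n))"
    using growth[OF SL gen fin g w mu] by blast
  define f where "f n = real (wlen S (mpow g n))" for n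
  have Gp: "mpow g n \<in> G" for n using SL_mpow[OF SL g] .
  have dp: "det (mpow g n) = 1" for n using SL_det[OF SL Gp] .
  have fsub: "f (m + n) \<le> f m + f n" for m n
    unfolding f_def mpow_add using wlen_mul[OF gen Gp Gp] by (metis of_nat_add of_nat_le_iff)
  have f0: "f n \<ge> 0" for n unfolding f_def by simp
  have "\<exists>N\<ge>1. f (2*N) - f N > 4 * \<delta>"
  proof (rule ccontr)
    assume "\<not> ?thesis"
    then have H: "f (2*N) \<le> f N + 4 * \<delta>" if "N \<ge> 1" for N
      using that \<open>\<not> (\<exists>N\<ge>1. f (2*N) - f N > 4 * \<delta>)\<close> by (smt (verit))
    have I: "f (2^k) \<le> f 1 + 4 * \<delta> * real k" for k
    proof (induction k)
      case 0 then show ?case by simp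
    next
      case (Suc k)
      have "f (2^Suc k) \<le> f (2^k) + 4 * \<delta>" using H[of "2^k"] by simp
      then show ?case using Suc by (simp add: algebra_simps)
    qed
    obtain k where "f 1 + 4 * \<delta> * real k < a * 2 ^ k"
      using ev2[OF a0, of "f 1" "4 * \<delta>"] unfolding eventually_sequentially by auto
    moreover have "a * 2 ^ k \<le> f (2^k)" using ga[of "2^k"] unfolding f_def by simp
    ultimately show False using I[of k] by simp
  qed
  then obtain N where N1: "N \<ge> 1" and Nd: "f (2*N) - f N > 4 * \<delta>" by blast
  define P where "P i = mpow g (i * N)" for i
  define D where "D i j = wdist S (P i) (P j)" for i j
  define A where "A = (2 * f N - f (2*N)) / 2"
  define B where "B = A + 2 * \<delta>"
  have GP: "P i \<in> G" for i unfolding P_def by (rule Gp)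
  have Dle: "D i j = f ((j - i) * N)" if "i \<le> j" for i j
  proof -
    have "P j = P i ** mpow g ((j - i) * N)"
      unfolding P_def mpow_add[symmetric] using that by (simp add: algebra_simps)
    then show ?thesis unfolding D_def f_def using wdist_left[OF dp] by (simp add: P_def)
  qed
  have Dsym: "D x y = D y x" for x y unfolding D_def using wdist_sym[OF SL gen GP GP] .
  have Drefl: "D x x = 0" for x using Dle[of x x] unfolding f_def by (simp add: wlen_one)
  have Dhyp: "min ((D x w + D y w - D x y) / 2) ((D y w + D z w - D y z) / 2) - \<delta>
          \<le> (D x w + D z w - D x z) / 2" for w x y z
    using hypd[OF GP[of x] GP[of y] GP[of z] GP[of w]] unfolding D_def gprod_def by simp
  have DN: "D m (m+1) = f N" for m using Dle[of m "m+1"] by simp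
  have D2N: "D (m-1) (m+1) = f (2*N)" if "m \<ge> 1" for m
    using Dle[of "m-1" "m+1"] that by (simp add: algebra_simps)
  have A2: "2*A = 2 * f N - f (2*N)" unfolding A_def by simp
  have Dstep: "D m (m+1) \<ge> f N" for m using DN by simp
  have Dmid: "(D (m-1) m + D (m+1) m - D (m-1) (m+1)) / 2 \<le> A" if "m \<ge> 1" for m
  proof -
    have "D (m-1) m = f N" using DN[of "m-1"] that by simp
    moreover have "D (m+1) m = f N" using DN[of m] Dsym[of "m+1" m] by simp
    ultimately have "D (m-1) m + D (m+1) m - D (m-1) (m+1) = 2 * A"
      using D2N[OF that] A2 by linarith
    then show ?thesis by simp
  qed
  have LA: "f N > 2*A + 4*\<delta>" using A2 Nd by linarith
  have "f (2*N) \<le> f N + f N" using fsub[of N N] by (metis mult_2)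
  then have A0: "0 \<le> A" using A2 by linarith
  have chain: "(D i m + D j m - D i j) / 2 \<le> A + 2*\<delta>" if "i \<le> m" "m \<le> j" for i m j
    by (rule chain_bound[where D=D and \<delta>=\<delta> and A=A and L="f N", OF Dsym Drefl Dhyp Dstep Dmid LA A0 d0 that])
  define B where "B = A + 2 * \<delta>"
  have P0: "P 0 = mat 1" unfolding P_def by simp
  have fN: "f (q * N) \<ge> a * real q" for q
  proof -
    have "q \<le> q * N" using N1 by simp
    then have "real q \<le> real (q * N)" by linarith
    then have "a * real q \<le> a * real (q * N)" using a0 by (simp add: mult_left_mono)
    also have "\<dots> \<le> f (q * N)" using ga[of "q * N"] unfolding f_def by simp
    finally show ?thesis .
  qed
  have low1: "gprod S (mat 1) (P q) (P q') \<ge> a * real q - B" if "q \<le> q'" for q q'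
  proof -
    have c: "(D 0 q + D q' q - D 0 q') / 2 \<le> B" using chain[of 0 q q'] that unfolding B_def by simp
    have "gprod S (mat 1) (P q) (P q') = (D q 0 + D q' 0 - D q q') / 2"
      unfolding gprod_def D_def P0 ..
    also have "\<dots> = D 0 q - (D 0 q + D q' q - D 0 q') / 2"
      using Dsym[of q 0] Dsym[of q' 0] Dsym[of q q'] by (simp add: field_simps)
    finally have "gprod S (mat 1) (P q) (P q') \<ge> D 0 q - B" using c by linarith
    moreover have "D 0 q = f (q * N)" using Dle[of 0 q] by simp
    ultimately show ?thesis using fN[of q] by linarith
  qed
  have low: "gprod S (mat 1) (P q) (P q') \<ge> a * real (min q q') - B" for q q'
  proof (cases "q \<le> q'")
    case True then show ?thesis using low1[OF True] by (simp add: min_def)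
  next
    case False
    then have "gprod S (mat 1) (P q') (P q) \<ge> a * real q' - B" using low1[of q' q] by simp
    then show ?thesis using False gprod_sym[OF SL gen GP GP] by (simp add: min_def)
  qed
  define E where "E = real N * f 1"
  have Ebd: "wdist S (mpow g m) (P (m div N)) \<le> E" for m
  proof -
    have "mpow g m = P (m div N) ** mpow g (m mod N)"
      unfolding P_def mpow_add[symmetric] by simp
    then have "wdist S (P (m div N)) (mpow g m) = f (m mod N)"
      unfolding f_def using wdist_left[OF dp] P_def by simp
    moreover have "f (m mod N) \<le> real (m mod N) * f 1"
    proof -
      have "f 1 = real (wlen S g)" unfolding f_def using mpow_1[of g] by simp
      then show ?thesis unfolding f_def using wlen_mpow[OF SL gen g, of "m mod N"]
        by (metis of_nat_le_iff of_nat_mult)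
    qed
    moreover have "real (m mod N) * f 1 \<le> E"
      unfolding E_def using f0[of 1] N1 by (simp add: mult_right_mono)
    ultimately show ?thesis using wdist_sym[OF SL gen Gp GP] by simp
  qed
  show ?thesis
    unfolding conv_inf_def
  proof (intro conjI allI)
    show "mpow g k \<in> G" for k by (rule Gp)
    fix K :: real
    obtain Q :: nat where Q: "(K + B + 2 * E) / a \<le> real Q" using real_arch_simple by blast
    then have aQ: "K + B + 2 * E \<le> a * real Q" using a0 by (simp add: field_simps)
    show "\<exists>N0. \<forall>m\<ge>N0. \<forall>k\<ge>N0. K \<le> gprod S (mat 1) (mpow g m) (mpow g k)"
    proof (intro exI allI impI)
      fix m k assume m: "Q * N \<le> m" and k: "Q * N \<le> k"
      have qm: "Q \<le> m div N" using div_le_mono[OF m, of N] N1 by simp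
      have qk: "Q \<le> k div N" using div_le_mono[OF k, of N] N1 by simp
      have "gprod S (mat 1) (mpow g m) (mpow g k) \<ge> gprod S (mat 1) (P (m div N)) (P (k div N))
          - wdist S (mpow g m) (P (m div N)) - wdist S (mpow g k) (P (k div N))"
        by (rule gprod_pert[OF SL gen SL_one[OF SL] Gp Gp GP GP])
      moreover have "a * real (min (m div N) (k div N)) \<ge> a * real Q"
        using qm qk a0 by (simp add: mult_left_mono)
      ultimately show "K \<le> gprod S (mat 1) (mpow g m) (mpow g k)"
        using low[of "m div N" "k div N"] Ebd[of m] Ebd[of k] aQ by linarith
    qed
  qed
qed


subsection \<open>Main\<close>

lemma span1: "x \<in> span {u} \<Longrightarrow> \<exists>k. x = k *\<^sub>R u"
  by (auto simp: span_singleton)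

lemma span1': "x = k *\<^sub>R u \<Longrightarrow> x \<in> span {u}"
  by (simp add: span_mul span_base)

lemma root_nonzero: "count (proots p) z = 1 \<Longrightarrow> p \<noteq> 0"
  by auto

theorem lemma3p5:
  fixes G S :: "(real^'n^'n) set"
    and \<xi> \<xi>s :: "(nat \<Rightarrow> real^'n^'n) set \<Rightarrow> real^'n"
    and v \<alpha> :: "real^'n" and \<gamma> :: "real^'n^'n" and T :: real
  assumes "CARD('n) > 1"
    and "proj_anosov G S"
    and "torsion_free G"
    and "limit_maps G S \<xi> \<xi>s"
    and "Mtilde G S \<xi> \<xi>s v \<alpha>"
    and "\<gamma> \<in> G" and "\<gamma> \<noteq> mat 1"
    and "T \<ge> 0"
    and "act_eq \<gamma> v \<alpha> (exp T *\<^sub>R v) (exp (- T) *\<^sub>R \<alpha>)"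
  shows "proj_eq v (\<xi> (attr_pt G S \<gamma>)) \<and> proj_eq \<alpha> (\<xi>s (rep_pt G S \<gamma>)) \<and> T = lam 1 \<gamma>"
proof -
  have SL: "SL_subgroup G" and fg: "fg_hyperbolic G S"
    using assms(2) unfolding proj_anosov_def by auto
  have g: "\<gamma> \<in> G" by fact
  have dg: "det \<gamma> = 1" using SL_det[OF SL g] .
  define gi where "gi = matrix_inv \<gamma>"
  have gi: "gi \<in> G" unfolding gi_def using SL_inv[OF SL g] .
  have gig: "gi ** \<gamma> = mat 1" unfolding gi_def using inv_props(2)[of \<gamma>] dg by simp
  obtain c where c0: "c \<noteq> 0" and cv: "\<gamma> *v v = c *\<^sub>R (exp T *\<^sub>R v)"
      and ca: "\<alpha> v* gi = c *\<^sub>R (exp (- T) *\<^sub>R \<alpha>)"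
    using assms(9) unfolding act_eq_def gi_def by blast
  have av: "\<alpha> \<bullet> v > 0" and Mt: "\<forall>x\<in>bdry G S. \<xi>s x \<bullet> v \<noteq> 0 \<or> \<alpha> \<bullet> \<xi> x \<noteq> 0"
    using assms(5) unfolding Mtilde_def by auto
  have v0: "v \<noteq> 0" and a0: "\<alpha> \<noteq> 0" using av by auto
  have bk: "a \<bullet> u = (a v* gi) \<bullet> (\<gamma> *v u)" for a u
    by (simp add: dot_lmul_matrix matrix_vector_mul_assoc gig)
  have ee: "exp (- T) * exp T = 1" by (simp add: exp_minus)
  have "\<alpha> \<bullet> v = (c *\<^sub>R (exp (- T) *\<^sub>R \<alpha>)) \<bullet> (c *\<^sub>R (exp T *\<^sub>R v))"
    using bk[of \<alpha> v] unfolding cv ca .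
  also have "\<dots> = (c * c) * (exp (- T) * exp T) * (\<alpha> \<bullet> v)" by (simp add: algebra_simps)
  finally have "\<alpha> \<bullet> v = (c * c) * (\<alpha> \<bullet> v)" using ee by simp
  then have cc: "c * c = 1" using av by (metis less_irrefl mult_cancel_right2)
  have "(c - 1) * (c + 1) = 0" using cc by (simp add: algebra_simps)
  then have "c = 1 \<or> c = -1" by (simp add: eq_neg_iff_add_eq_0)
  then have cabs: "\<bar>c\<bar> = 1" by auto
  have LM: "limit_maps G S \<xi> \<xi>s" by fact
  note L4 = LM[unfolded limit_maps_def, THEN conjunct2, THEN conjunct2, THEN conjunct2, rule_format]
  have gi1: "gi \<noteq> mat 1"
  proof
    assume "gi = mat 1"
    then have "\<gamma> = mat 1" using gig by (metis matrix_mul_lid)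
    then show False using assms(7) by simp
  qed
  have io_gi: "infinite_order gi" using assms(3) gi gi1 unfolding torsion_free_def by blast
  have io_g: "infinite_order \<gamma>" using assms(3,6,7) unfolding torsion_free_def by blast
  obtain \<mu>' where mu'1: "\<bar>\<mu>'\<bar> = exp (lam 1 gi)" and mu'c: "count (proots (cpoly gi)) (complex_of_real \<mu>') = 1"
      and mu'e: "{w. gi *v w = \<mu>' *\<^sub>R w} = span {\<xi> (attr_pt G S gi)}" and lgi: "lam 1 gi > 0"
    using L4[OF gi io_gi] by (elim conjE exE) blast
  have mu'gt: "\<bar>\<mu>'\<bar> > 1" using mu'1 lgi by simp
  have "poly (cpoly gi) (complex_of_real \<mu>') = 0"
    using mu'c root_nonzero[OF mu'c] by (metis count_proots order_root zero_neq_one)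
  then obtain w where w: "w \<noteq> 0" "gi *v w = \<mu>' *\<^sub>R w" using eig_root by blast
  have ci: "conv_inf G S (\<lambda>k. mpow gi k)" by (rule powers_conv_inf[OF SL fg gi w mu'gt])
  define r where "r = rep_pt G S \<gamma>"
  have r_attr: "attr_pt G S gi = r" unfolding r_def attr_pt_def rep_pt_def gi_def ..
  have rb: "r \<in> bdry G S" unfolding r_def rep_pt_def bdry_def gi_def[symmetric] using ci by blast
  have case2: "\<alpha> \<bullet> \<xi> r = 0"
  proof (rule ccontr)
    assume nz: "\<alpha> \<bullet> \<xi> r \<noteq> 0"
    have "\<xi> r \<in> span {\<xi> (attr_pt G S gi)}" using r_attr by (simp add: span_base)
    then have ev: "gi *v \<xi> r = \<mu>' *\<^sub>R \<xi> r" using mu'e by blast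
    have "(\<alpha> v* gi) \<bullet> \<xi> r = \<alpha> \<bullet> (gi *v \<xi> r)" by (rule dot_lmul_matrix)
    then have "(c * exp (- T)) * (\<alpha> \<bullet> \<xi> r) = \<mu>' * (\<alpha> \<bullet> \<xi> r)"
      unfolding ca ev by simp
    then have "\<mu>' = c * exp (- T)" using nz by simp
    then have "\<bar>\<mu>'\<bar> = exp (- T)" using cabs by (simp add: abs_mult)
    moreover have "exp (- T) \<le> 1" using assms(8) by simp
    ultimately show False using mu'gt by simp
  qed
  then have xv: "\<xi>s r \<bullet> v \<noteq> 0" using Mt rb by blast
  obtain \<nu> where nu1: "\<bar>\<nu>\<bar> = exp (- lam 1 \<gamma>)" and nue: "{a. a v* gi = \<nu> *\<^sub>R a} = span {\<xi>s r}"
    using L4[OF g io_g] unfolding r_def gi_def by (elim conjE exE) blast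
  have "\<xi>s r \<in> span {\<xi>s r}" by (simp add: span_base)
  then have nuev: "\<xi>s r v* gi = \<nu> *\<^sub>R \<xi>s r" using nue by blast
  have "\<xi>s r \<bullet> v = (\<nu> *\<^sub>R \<xi>s r) \<bullet> (c *\<^sub>R (exp T *\<^sub>R v))"
    using bk[of "\<xi>s r" v] unfolding nuev cv .
  also have "\<dots> = (\<nu> * c * exp T) * (\<xi>s r \<bullet> v)" by (simp add: algebra_simps)
  finally have "\<xi>s r \<bullet> v = (\<nu> * c * exp T) * (\<xi>s r \<bullet> v)" .
  then have nce: "\<nu> * c * exp T = 1" using xv by (metis mult_cancel_right2)
  then have "\<bar>\<nu>\<bar> * exp T = 1" using cabs by (metis abs_exp_cancel abs_mult abs_one mult.right_neutral)
  then have "exp (- lam 1 \<gamma>) * exp T = 1" using nu1 by simp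
  then have "exp (- lam 1 \<gamma> + T) = 1" by (simp only: exp_add)
  then have Tl: "T = lam 1 \<gamma>" by simp
  have nuc: "\<nu> = c * exp (- T)"
  proof -
    have "\<nu> * c * exp T * (c * exp (- T)) = c * exp (- T)" using nce by simp
    then show ?thesis using cc by (simp add: exp_minus field_simps)
  qed
  have "\<alpha> \<in> span {\<xi>s r}" using ca nuc nue by auto
  then obtain k where k: "\<alpha> = k *\<^sub>R \<xi>s r" using span1 by blast
  have pa: "proj_eq \<alpha> (\<xi>s (rep_pt G S \<gamma>))"
    unfolding proj_eq_def r_def[symmetric] using k a0 by (intro exI[of _ k]) auto
  obtain \<mu> where mu1: "\<bar>\<mu>\<bar> = exp (lam 1 \<gamma>)" and muc: "count (proots (cpoly \<gamma>)) (complex_of_real \<mu>) = 1"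
      and muu: "\<forall>z. z \<in># proots (cpoly \<gamma>) \<and> cmod z = exp (lam 1 \<gamma>) \<longrightarrow> z = complex_of_real \<mu>"
      and mue: "{w. \<gamma> *v w = \<mu> *\<^sub>R w} = span {\<xi> (attr_pt G S \<gamma>)}"
    using L4[OF g io_g] by (elim conjE exE) blast
  have "\<gamma> *v v = (c * exp T) *\<^sub>R v" using cv by simp
  then have "poly (cpoly \<gamma>) (complex_of_real (c * exp T)) = 0" using eig_root v0 by blast
  then have "complex_of_real (c * exp T) \<in># proots (cpoly \<gamma>)"
    using root_nonzero[OF muc] by simp
  moreover have "cmod (complex_of_real (c * exp T)) = exp (lam 1 \<gamma>)"
    using cabs Tl by (simp only: norm_of_real abs_mult abs_exp_cancel)
  ultimately have "complex_of_real (c * exp T) = complex_of_real \<mu>" using muu by blast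
  then have "\<mu> = c * exp T" by (metis of_real_eq_iff)
  then have "v \<in> span {\<xi> (attr_pt G S \<gamma>)}" using mue cv by auto
  then obtain k' where k': "v = k' *\<^sub>R \<xi> (attr_pt G S \<gamma>)" using span1 by blast
  have pv: "proj_eq v (\<xi> (attr_pt G S \<gamma>))"
    unfolding proj_eq_def using k' v0 by (intro exI[of _ k']) auto
  show ?thesis using pv pa Tl by blast
qed

end
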